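(* Let $n\ge2$ and $k\ge1$ be integers, $(S^n,g_0)$ the round unit sphere in $\mathbb{R}^{n+1}$, and $x$ a first spherical harmonic, i.e. the restriction to $S^n$ of a linear function on $\mathbb{R}^{n+1}$. Let $X=\nabla x$ be its $g_0$-gradient. Then for all $u\in C^\infty(S^n)$, \[ L_{2k}(xu) - xL_{2k}u = k\Bigl((n+2k-2)\,x\,L_{2k-2}u - 2\,X\bigl(L_{2k-2}u\bigr)\Bigr), \] where $X(f)$ denotes the derivative of $f$ along $X$.
   Context: $\Delta$ is the (nonpositive) Laplacian of $g_0$; for an integer $m\ge1$, $L_{2m}:=\prod_{j=1}^m\bigl(-\Delta+\tfrac{(n-2j)(n+2j-2)}{4}\bigr)$, and $L_0$ is the identity. *)

theory Defs
  imports "HOL-Analysis.Analysis"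
begin

definition dirder :: "real^'n::finite \<Rightarrow> (real^'n \<Rightarrow> real) \<Rightarrow> real^'n \<Rightarrow> real" where
  "dirder v f y = frechet_derivative f (at y) v"

fun iter_dirder :: "(real^'n::finite) list \<Rightarrow> (real^'n \<Rightarrow> real) \<Rightarrow> real^'n \<Rightarrow> real" where
  "iter_dirder [] f = f"
| "iter_dirder (v # vs) f = dirder v (iter_dirder vs f)"

definition smooth_on :: "(real^'n::finite) set \<Rightarrow> (real^'n \<Rightarrow> real) \<Rightarrow> bool" where
  "smooth_on S f \<longleftrightarrow> (\<forall>vs. iter_dirder vs f differentiable_on S)"

definition eucl_lap :: "(real^'n::finite \<Rightarrow> real) \<Rightarrow> real^'n \<Rightarrow> real" where
  "eucl_lap f y = (\<Sum>i\<in>UNIV. dirder (axis i 1) (dirder (axis i 1) f) y)"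

text \<open>A function on the unit sphere S^n (given by its values there) is extended
  0-homogeneously to R^(n+1) - {0}.\<close>
definition hom_ext :: "(real^'n::finite \<Rightarrow> real) \<Rightarrow> real^'n \<Rightarrow> real" where
  "hom_ext u y = u (y /\<^sub>R norm y)"

definition smooth_on_sphere :: "(real^'n::finite \<Rightarrow> real) \<Rightarrow> bool" where
  "smooth_on_sphere u \<longleftrightarrow> smooth_on (- {0}) (hom_ext u)"

text \<open>The (nonpositive) Laplace-Beltrami operator of the round metric g_0 on S^n:
  the Euclidean Laplacian of the 0-homogeneous extension, evaluated on S^n
  (only values on the sphere are meaningful).\<close>
definition sph_lap :: "(real^'n::finite \<Rightarrow> real) \<Rightarrow> real^'n \<Rightarrow> real" where
  "sph_lap u p = eucl_lap (hom_ext u) p"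

text \<open>L_{2m} = prod_{j=1..m} (-Delta + (n-2j)(n+2j-2)/4), L_0 = id.\<close>
fun GJMS :: "nat \<Rightarrow> nat \<Rightarrow> (real^'n::finite \<Rightarrow> real) \<Rightarrow> real^'n \<Rightarrow> real" where
  "GJMS n 0 u = u"
| "GJMS n (Suc m) u = (\<lambda>p. - sph_lap (GJMS n m u) p
      + ((real n - 2 * real (Suc m)) * (real n + 2 * real (Suc m) - 2) / 4) * GJMS n m u p)"

text \<open>Derivative of f along the g_0-gradient X of the first spherical harmonic
  x(p) = a . p, at a point p of S^n; X(p) = a - (a . p) p.\<close>
definition grad_deriv :: "real^'n::finite \<Rightarrow> (real^'n \<Rightarrow> real) \<Rightarrow> real^'n \<Rightarrow> real" where
  "grad_deriv a f p = dirder (a - (a \<bullet> p) *\<^sub>R p) (hom_ext f) p"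

end

theory Submission
  imports Defs
begin


lemma dirder_has: assumes "(F has_derivative F') (at y)" shows "dirder v F y = F' v"
  using assms unfolding dirder_def by (simp add: frechet_derivative_at[symmetric])

lemma dirder_works: assumes "F differentiable (at y)"
  shows "(F has_derivative (\<lambda>v. dirder v F y)) (at y)"
  using assms unfolding dirder_def by (simp add: frechet_derivative_works[symmetric])

lemma dirder_cong:
  assumes "open S" "y \<in> S" "\<And>z. z \<in> S \<Longrightarrow> F z = G z"
  shows "dirder v F y = dirder v G y"
proof -
  have "(\<lambda>f'. (F has_derivative f') (at y)) = (\<lambda>f'. (G has_derivative f') (at y))"
  proof (rule ext, rule iffI)
    fix f' assume "(F has_derivative f') (at y)"
    then show "(G has_derivative f') (at y)"
      by (rule has_derivative_transform_within_open[OF _ assms(1,2)]) (simp add: assms(3))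
  next
    fix f' assume "(G has_derivative f') (at y)"
    then show "(F has_derivative f') (at y)"
      by (rule has_derivative_transform_within_open[OF _ assms(1,2)]) (simp add: assms(3))
  qed
  then show ?thesis unfolding dirder_def frechet_derivative_def by simp
qed

lemma dirder_linear: assumes "F differentiable (at y)"
  shows "linear (\<lambda>v. dirder v F y)"
  using dirder_works[OF assms] has_derivative_linear by blast

lemma dirder_add:
  assumes "F differentiable (at y)" "G differentiable (at y)"
  shows "dirder v (\<lambda>z. F z + G z) y = dirder v F y + dirder v G y"
proof -
  have "((\<lambda>z. F z + G z) has_derivative (\<lambda>v. dirder v F y + dirder v G y)) (at y)"
    by (intro has_derivative_add dirder_works assms)
  from dirder_has[OF this] show ?thesis by simp
qed

lemma dirder_diff:
  assumes "F differentiable (at y)" "G differentiable (at y)"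
  shows "dirder v (\<lambda>z. F z - G z) y = dirder v F y - dirder v G y"
proof -
  have "((\<lambda>z. F z - G z) has_derivative (\<lambda>v. dirder v F y - dirder v G y)) (at y)"
    by (intro has_derivative_diff dirder_works assms)
  from dirder_has[OF this] show ?thesis by simp
qed

lemma dirder_mult:
  assumes "F differentiable (at y)" "G differentiable (at y)"
  shows "dirder v (\<lambda>z. F z * G z) y = F y * dirder v G y + dirder v F y * G y"
proof -
  have "((\<lambda>z. F z * G z) has_derivative (\<lambda>v. F y * dirder v G y + dirder v F y * G y)) (at y)"
    by (intro has_derivative_mult dirder_works assms)
  from dirder_has[OF this] show ?thesis by simp
qed

lemma dirder_cmult:
  assumes "F differentiable (at y)"
  shows "dirder v (\<lambda>z. c * F z) y = c * dirder v F y"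
proof -
  have "((\<lambda>z. c * F z) has_derivative (\<lambda>v. c * dirder v F y)) (at y)"
    by (intro has_derivative_mult_right dirder_works assms)
  from dirder_has[OF this] show ?thesis by simp
qed

lemma dirder_const: "dirder v (\<lambda>z. c) y = 0"
proof -
  have "((\<lambda>z. c) has_derivative (\<lambda>v. 0)) (at y)" by simp
  from dirder_has[OF this] show ?thesis by simp
qed

lemma dirder_inner: "dirder v (\<lambda>z. a \<bullet> z) y = a \<bullet> v"
proof -
  have "((\<lambda>z. a \<bullet> z) has_derivative (\<lambda>v. a \<bullet> v)) (at y)"
    by (intro has_derivative_inner_right has_derivative_ident)
  from dirder_has[OF this] show ?thesis by simp
qed

lemma dirder_self_inner: "dirder v (\<lambda>z. z \<bullet> z) y = 2 * (y \<bullet> v)"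
proof -
  have "((\<lambda>z. z \<bullet> z) has_derivative (\<lambda>v. y \<bullet> v + v \<bullet> y)) (at y)"
    by (intro has_derivative_inner has_derivative_ident)
  from dirder_has[OF this] show ?thesis by (simp add: inner_commute)
qed

lemma dirder_sum:
  assumes "finite I" "\<And>i. i \<in> I \<Longrightarrow> F i differentiable (at y)"
  shows "dirder v (\<lambda>z. \<Sum>i\<in>I. F i z) y = (\<Sum>i\<in>I. dirder v (F i) y)"
proof -
  have "((\<lambda>z. \<Sum>i\<in>I. F i z) has_derivative (\<lambda>v. \<Sum>i\<in>I. dirder v (F i) y)) (at y)"
    by (intro has_derivative_sum dirder_works assms)
  from dirder_has[OF this] show ?thesis by simp
qed

lemma dirder_norm: assumes "y \<noteq> 0"
  shows "dirder v norm y = (y \<bullet> v) / norm y"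
proof -
  have "(norm has_derivative (\<lambda>h. h \<bullet> sgn y)) (at y)"
    using has_derivative_norm[OF assms] by simp
  from dirder_has[OF this] show ?thesis using assms by (simp add: sgn_div_norm inner_commute field_simps)
qed

lemma dirder_inv_norm: assumes "y \<noteq> 0"
  shows "dirder v (\<lambda>z. inverse (norm z)) y = - (y \<bullet> v) * inverse (norm y) ^ 3"
proof -
  have N: "(norm has_derivative (\<lambda>h. h \<bullet> sgn y)) (at y)"
    using has_derivative_norm[OF assms] by simp
  have "((\<lambda>z. inverse (norm z)) has_derivative
     (\<lambda>h. - (inverse (norm y) * (h \<bullet> sgn y) * inverse (norm y)))) (at y)"
    by (rule Deriv.has_derivative_inverse[OF _ N]) (use assms in simp)
  from dirder_has[OF this] show ?thesis using assms
    by (simp add: sgn_div_norm inner_commute power3_eq_cube field_simps)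
qed

lemma dirder_expand: assumes "F differentiable (at y)"
  shows "dirder v F y = (\<Sum>i\<in>UNIV. v $ i * dirder (axis i 1) F y)"
proof -
  have "v = (\<Sum>i\<in>UNIV. v $ i *\<^sub>R axis i 1)"
    using basis_expansion[of v] by (simp add: scalar_mult_eq_scaleR)
  then have "dirder v F y = dirder (\<Sum>i\<in>UNIV. v $ i *\<^sub>R axis i 1) F y" by simp
  also have "\<dots> = (\<Sum>i\<in>UNIV. v $ i * dirder (axis i 1) F y)"
    by (simp add: linear_sum[OF dirder_linear[OF assms]] linear_scale[OF dirder_linear[OF assms]])
  finally show ?thesis .
qed

lemma dirder_dir_diff: assumes "F differentiable (at y)"
  shows "dirder (a - c *\<^sub>R b) F y = dirder a F y - c * dirder b F y"
  using linear_diff[OF dirder_linear[OF assms]] linear_scale[OF dirder_linear[OF assms]]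
  by simp

lemma dirder_line:
  assumes "F differentiable (at (y + s *\<^sub>R u))"
  shows "((\<lambda>s. F (y + s *\<^sub>R u)) has_real_derivative dirder u F (y + s *\<^sub>R u)) (at s)"
proof -
  have l: "((\<lambda>s. y + s *\<^sub>R u) has_derivative (\<lambda>h. h *\<^sub>R u)) (at s)"
    by (auto intro!: derivative_eq_intros)
  have "((\<lambda>s. F (y + s *\<^sub>R u)) has_derivative (\<lambda>h. dirder (h *\<^sub>R u) F (y + s *\<^sub>R u))) (at s)"
    by (rule has_derivative_compose[OF l dirder_works[OF assms]])
  moreover have "(\<lambda>h. dirder (h *\<^sub>R u) F (y + s *\<^sub>R u)) = (*) (dirder u F (y + s *\<^sub>R u))"
    using linear_scale[OF dirder_linear[OF assms]] by (auto intro!: ext simp: mult.commute)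
  ultimately show ?thesis by (simp add: has_field_derivative_def mult.commute)
qed

lemma dirder_scale_chain:
  assumes "F differentiable (at (t *\<^sub>R y))"
  shows "dirder v (\<lambda>z. F (t *\<^sub>R z)) y = t * dirder v F (t *\<^sub>R y)"
proof -
  have l: "((\<lambda>z. t *\<^sub>R z) has_derivative (\<lambda>h. t *\<^sub>R h)) (at y)"
    by (auto intro!: derivative_eq_intros)
  have "((\<lambda>z. F (t *\<^sub>R z)) has_derivative (\<lambda>h. dirder (t *\<^sub>R h) F (t *\<^sub>R y))) (at y)"
    by (rule has_derivative_compose[OF l dirder_works[OF assms]])
  from dirder_has[OF this] show ?thesis
    using linear_scale[OF dirder_linear[OF assms]] by simp
qed



definition sm :: "(real^'n::finite) set \<Rightarrow> nat \<Rightarrow> (real^'n \<Rightarrow> real) \<Rightarrow> bool" where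
  "sm S m F \<longleftrightarrow> (\<forall>vs. length vs \<le> m \<longrightarrow> iter_dirder vs F differentiable_on S)"

lemma iter_dirder_snoc: "iter_dirder (vs @ [v]) F = iter_dirder vs (dirder v F)"
  by (induction vs) simp_all

lemma sm_0: "sm S 0 F \<longleftrightarrow> F differentiable_on S"
  unfolding sm_def by auto

lemma sm_Suc: "sm S (Suc m) F \<longleftrightarrow> F differentiable_on S \<and> (\<forall>v. sm S m (dirder v F))"
proof
  assume H: "sm S (Suc m) F"
  have "F differentiable_on S" using H[unfolded sm_def, rule_format, of "[]"] by simp
  moreover have "sm S m (dirder v F)" for v
    unfolding sm_def
  proof (intro allI impI)
    fix vs :: "(real^'a) list" assume "length vs \<le> m"
    then show "iter_dirder vs (dirder v F) differentiable_on S"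
      using H[unfolded sm_def, rule_format, of "vs @ [v]"] by (simp add: iter_dirder_snoc)
  qed
  ultimately show "F differentiable_on S \<and> (\<forall>v. sm S m (dirder v F))" by blast
next
  assume H: "F differentiable_on S \<and> (\<forall>v. sm S m (dirder v F))"
  show "sm S (Suc m) F" unfolding sm_def
  proof (intro allI impI)
    fix vs :: "(real^'a) list" assume L: "length vs \<le> Suc m"
    show "iter_dirder vs F differentiable_on S"
    proof (cases vs rule: rev_cases)
      case Nil then show ?thesis using H by simp
    next
      case (snoc ws v)
      then show ?thesis using H L unfolding sm_def by (simp add: iter_dirder_snoc)
    qed
  qed
qed

lemma sm_mono: "sm S m F \<Longrightarrow> k \<le> m \<Longrightarrow> sm S k F"
  unfolding sm_def by auto

lemma sm_diffable: assumes "sm S m F" "open S" "y \<in> S" shows "F differentiable (at y)"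
proof -
  have "length ([]::(real^'a) list) \<le> m" by simp
  then have "iter_dirder [] F differentiable_on S" using assms(1) unfolding sm_def by blast
  then have "\<forall>x\<in>S. F differentiable at x" using differentiable_on_eq_differentiable_at[OF assms(2), THEN iffD1] by simp
  then show ?thesis using assms(3) by blast
qed

lemma sm_dirder: "sm S (Suc m) F \<Longrightarrow> sm S m (dirder v F)"
  using sm_Suc by blast

lemma smooth_sm: "smooth_on S F \<longleftrightarrow> (\<forall>m. sm S m F)"
  unfolding smooth_on_def sm_def by (meson order_refl)

lemma iter_dirder_cong:
  assumes "open S" "\<And>z. z \<in> S \<Longrightarrow> F z = G z"
  shows "z \<in> S \<Longrightarrow> iter_dirder vs F z = iter_dirder vs G z"
proof (induction vs arbitrary: z)
  case Nil then show ?case using assms by simp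
next
  case (Cons v vs)
  show ?case unfolding iter_dirder.simps
    by (rule dirder_cong[OF assms(1) Cons.prems]) (rule Cons.IH)
qed

lemma diffon_cong:
  assumes "F differentiable_on S" "open S" "\<And>z. z \<in> S \<Longrightarrow> F z = G z"
  shows "G differentiable_on S"
proof -
  have "G differentiable (at z)" if "z \<in> S" for z
  proof -
    have "F differentiable (at z)" using assms(1,2) that differentiable_on_eq_differentiable_at by blast
    then obtain F' where "(F has_derivative F') (at z)" unfolding differentiable_def by blast
    then have "(G has_derivative F') (at z)"
      by (rule has_derivative_transform_within_open[OF _ assms(2) that]) (simp add: assms(3))
    then show ?thesis unfolding differentiable_def by blast
  qed
  then show ?thesis using assms(2) differentiable_on_eq_differentiable_at by blast
qed

lemma sm_cong:
  assumes "sm S m F" "open S" "\<And>z. z \<in> S \<Longrightarrow> F z = G z"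
  shows "sm S m G"
  unfolding sm_def
proof (intro allI impI)
  fix vs :: "(real^'a) list" assume "length vs \<le> m"
  then have "iter_dirder vs F differentiable_on S" using assms(1) unfolding sm_def by blast
  then show "iter_dirder vs G differentiable_on S"
    by (rule diffon_cong[OF _ assms(2)]) (rule iter_dirder_cong[OF assms(2,3)])
qed

lemma sm_const: "sm S m (\<lambda>z. c)"
proof (induction m arbitrary: c)
  case 0 then show ?case by (simp add: sm_0)
next
  case (Suc m)
  have d: "dirder v (\<lambda>z. c) = (\<lambda>z. 0)" for v by (rule ext) (rule dirder_const)
  show ?case unfolding sm_Suc d using Suc.IH by simp
qed

lemma inner_diffon: "(\<lambda>z. a \<bullet> z) differentiable_on S"
  unfolding differentiable_on_def differentiable_def
  using has_derivative_inner_right[OF has_derivative_ident] by blast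

lemma self_inner_diffon: "(\<lambda>z. z \<bullet> z) differentiable_on S"
  unfolding differentiable_on_def differentiable_def
  using has_derivative_inner[OF has_derivative_ident has_derivative_ident] by blast

lemma diff_inv_norm: fixes y :: "real^'n::finite" assumes "y \<noteq> 0" shows "(\<lambda>z. inverse (norm z)) differentiable (at y)"
proof -
  have N: "(norm has_derivative (\<lambda>h. h \<bullet> sgn y)) (at y)"
    using has_derivative_norm[OF assms] by simp
  have "((\<lambda>z. inverse (norm z)) has_derivative
     (\<lambda>h. - (inverse (norm y) * (h \<bullet> sgn y) * inverse (norm y)))) (at y)"
    by (rule Deriv.has_derivative_inverse[OF _ N]) (use assms in simp)
  then show ?thesis unfolding differentiable_def by blast
qed

lemma sm_inner: "sm S m (\<lambda>z. a \<bullet> z)"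
proof (cases m)
  case 0 then show ?thesis by (simp add: sm_0 inner_diffon)
next
  case (Suc k)
  have d: "dirder v (\<lambda>z. a \<bullet> z) = (\<lambda>z. a \<bullet> v)" for v by (rule ext) (rule dirder_inner)
  show ?thesis unfolding Suc sm_Suc d by (simp add: sm_const inner_diffon)
qed

lemma sm_add:
  assumes "open S" shows "sm S m F \<Longrightarrow> sm S m G \<Longrightarrow> sm S m (\<lambda>z. F z + G z)"
proof (induction m arbitrary: F G)
  case 0 then show ?case by (simp add: sm_0)
next
  case (Suc m)
  show ?case unfolding sm_Suc
  proof (intro conjI allI)
    show "(\<lambda>z. F z + G z) differentiable_on S" using Suc.prems by (simp add: sm_Suc)
    fix v
    have "sm S m (\<lambda>z. dirder v F z + dirder v G z)"
      using Suc.IH Suc.prems by (simp add: sm_Suc)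
    moreover have "dirder v F z + dirder v G z = dirder v (\<lambda>z. F z + G z) z" if "z \<in> S" for z
      using sm_diffable[OF Suc.prems(1) assms that] sm_diffable[OF Suc.prems(2) assms that]
      by (simp add: dirder_add)
    ultimately show "sm S m (dirder v (\<lambda>z. F z + G z))"
      by (rule sm_cong[OF _ assms])
  qed
qed

lemma sm_mult:
  assumes "open S" shows "sm S m F \<Longrightarrow> sm S m G \<Longrightarrow> sm S m (\<lambda>z. F z * G z)"
proof (induction m arbitrary: F G)
  case 0 then show ?case by (simp add: sm_0)
next
  case (Suc m)
  show ?case unfolding sm_Suc
  proof (intro conjI allI)
    show "(\<lambda>z. F z * G z) differentiable_on S" using Suc.prems by (simp add: sm_Suc)
    fix v
    have F: "sm S m F" "sm S m (dirder v F)" and G: "sm S m G" "sm S m (dirder v G)"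
      using Suc.prems sm_mono[OF Suc.prems(1)] sm_mono[OF Suc.prems(2)] by (auto simp: sm_Suc)
    have "sm S m (\<lambda>z. F z * dirder v G z + dirder v F z * G z)"
      using Suc.IH F G by (intro sm_add[OF assms]) auto
    moreover have "F z * dirder v G z + dirder v F z * G z = dirder v (\<lambda>z. F z * G z) z" if "z \<in> S" for z
      using sm_diffable[OF Suc.prems(1) assms that] sm_diffable[OF Suc.prems(2) assms that]
      by (simp add: dirder_mult)
    ultimately show "sm S m (dirder v (\<lambda>z. F z * G z))"
      by (rule sm_cong[OF _ assms])
  qed
qed

lemma sm_cmult: "open S \<Longrightarrow> sm S m F \<Longrightarrow> sm S m (\<lambda>z. c * F z)"
  using sm_mult[OF _ sm_const] by blast

lemma sm_diff: assumes "open S" "sm S m F" "sm S m G" shows "sm S m (\<lambda>z. F z - G z)"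
proof -
  have "sm S m (\<lambda>z. F z + (-1) * G z)" using assms by (intro sm_add sm_cmult)
  then show ?thesis by (rule sm_cong[OF _ assms(1)]) simp
qed

lemma sm_sum: assumes "open S" "finite I" shows "(\<And>i. i \<in> I \<Longrightarrow> sm S m (F i)) \<Longrightarrow> sm S m (\<lambda>z. \<Sum>i\<in>I. F i z)"
  using assms(2)
proof (induction I rule: finite_induct)
  case empty then show ?case by (simp add: sm_const)
next
  case (insert i I)
  then show ?case by (simp add: sm_add[OF assms(1)])
qed

lemma sm_inv_norm: assumes "open S" "0 \<notin> S" shows "sm S m (\<lambda>z. inverse (norm z))"
proof (induction m)
  case 0 then show ?case unfolding sm_0
      using assms diff_inv_norm differentiable_on_eq_differentiable_at by metis
next
  case (Suc m)
  show ?case unfolding sm_Suc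
  proof (intro conjI allI)
    show "(\<lambda>z. inverse (norm z)) differentiable_on S"
      using assms diff_inv_norm differentiable_on_eq_differentiable_at by metis
    fix v
    have A: "sm S m (\<lambda>z. - (z \<bullet> v))"
      by (rule sm_cong[OF sm_inner[of S m "-v"] assms(1)]) (simp add: inner_commute)
    have "sm S m (\<lambda>z. - (z \<bullet> v) * (inverse (norm z) * (inverse (norm z) * inverse (norm z))))"
      using Suc A by (intro sm_mult[OF assms(1)])
    moreover have "- (z \<bullet> v) * (inverse (norm z) * (inverse (norm z) * inverse (norm z))) = dirder v (\<lambda>z. inverse (norm z)) z" if "z \<in> S" for z
      proof -
      have "z \<noteq> 0" using that assms by auto
      then show ?thesis using dirder_inv_norm[of z v] by (simp add: power3_eq_cube ac_simps)
    qed
    ultimately show "sm S m (dirder v (\<lambda>z. inverse (norm z)))"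
      by (rule sm_cong[OF _ assms(1)])
  qed
qed

lemma sm_self_inner: fixes S :: "(real^'n::finite) set" assumes "open S" shows "sm S m (\<lambda>z. z \<bullet> z)"
proof (cases m)
  case 0 then show ?thesis by (simp add: sm_0 self_inner_diffon)
next
  case (Suc k)
  show ?thesis unfolding Suc sm_Suc
  proof (intro conjI allI)
    show "(\<lambda>z. z \<bullet> z) differentiable_on S" by (rule self_inner_diffon)
    fix v :: "real^'n"
    have d: "dirder v (\<lambda>z. z \<bullet> z) = (\<lambda>z. 2 * (v \<bullet> z))"
      by (rule ext) (simp add: dirder_self_inner inner_commute)
    show "sm S k (dirder v (\<lambda>z. z \<bullet> z))" unfolding d
      by (rule sm_cmult[OF assms sm_inner])
  qed
qed

lemma sm_norm: assumes "open S" "0 \<notin> S" shows "sm S m norm"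
proof -
  have "sm S m (\<lambda>z. (z \<bullet> z) * inverse (norm z))"
    using sm_mult[OF assms(1) sm_self_inner[OF assms(1)] sm_inv_norm[OF assms]] by blast
  then show ?thesis
  proof (rule sm_cong[OF _ assms(1)])
    fix z :: "real^'a" assume "z \<in> S"
    then have "z \<noteq> 0" using assms by auto
    then show "z \<bullet> z * inverse (norm z) = norm z"
      by (simp add: dot_square_norm power2_eq_square)
  qed
qed



definition homog :: "real \<Rightarrow> (real^'n::finite \<Rightarrow> real) \<Rightarrow> bool" where
  "homog d F \<longleftrightarrow> (\<forall>y. y \<noteq> 0 \<longrightarrow> (\<forall>t>0. F (t *\<^sub>R y) = t powr d * F y))"

lemma homogD: "homog d F \<Longrightarrow> y \<noteq> 0 \<Longrightarrow> t > 0 \<Longrightarrow> F (t *\<^sub>R y) = t powr d * F y"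
  unfolding homog_def by blast

lemma open_nz: "open (- {0::real^'n::finite})" by auto

lemma homog_dirder:
  fixes F :: "real^'n::finite \<Rightarrow> real"
  assumes "homog d F" "F differentiable_on (- {0})"
  shows "homog (d - 1) (dirder v F)"
  unfolding homog_def
proof (intro allI impI)
  fix y :: "real^'n" and t :: real assume y: "y \<noteq> 0" and t: "t > 0"
  have ty: "t *\<^sub>R y \<noteq> 0" using y t by simp
  have Fd: "F differentiable (at z)" if "z \<noteq> 0" for z
    using assms(2) that differentiable_on_eq_differentiable_at[OF open_nz] by auto
  have "dirder v (\<lambda>z. F (t *\<^sub>R z)) y = t * dirder v F (t *\<^sub>R y)"
    by (rule dirder_scale_chain[OF Fd[OF ty]])
  moreover have "dirder v (\<lambda>z. F (t *\<^sub>R z)) y = dirder v (\<lambda>z. t powr d * F z) y"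
    by (rule dirder_cong[OF open_nz]) (use y t assms(1) homogD in auto)
  moreover have "dirder v (\<lambda>z. t powr d * F z) y = t powr d * dirder v F y"
    by (rule dirder_cmult[OF Fd[OF y]])
  ultimately have "t * dirder v F (t *\<^sub>R y) = t powr d * dirder v F y" by simp
  then have "dirder v F (t *\<^sub>R y) = t powr d / t * dirder v F y"
    using t by (simp add: field_simps)
  then show "dirder v F (t *\<^sub>R y) = t powr (d - 1) * dirder v F y"
    using t by (simp add: powr_diff)
qed

lemma euler:
  fixes F :: "real^'n::finite \<Rightarrow> real"
  assumes "homog d F" "y \<noteq> 0" "F differentiable (at y)"
  shows "dirder y F y = d * F y"
proof -
  have "((\<lambda>s. F (0 + s *\<^sub>R y)) has_real_derivative dirder y F (0 + 1 *\<^sub>R y)) (at 1)"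
    by (rule dirder_line) (use assms(3) in simp)
  then have D1: "((\<lambda>s. F (s *\<^sub>R y)) has_real_derivative dirder y F y) (at 1)" by simp
  have "((\<lambda>s. s powr d * F y) has_real_derivative d * 1 powr (d - 1) * F y) (at 1)"
    by (rule DERIV_cmult_right) (rule has_real_derivative_powr, simp)
  then have "((\<lambda>s. s powr d * F y) has_real_derivative d * F y) (at 1)" by simp
  then have D2: "((\<lambda>s. F (s *\<^sub>R y)) has_real_derivative d * F y) (at 1)"
    by (rule has_field_derivative_transform_within_open[where S="{0<..}"])
       (auto simp: homogD[OF assms(1,2)])
  show ?thesis using DERIV_unique[OF D1 D2] .
qed

lemma homog_sum: "finite I \<Longrightarrow> (\<And>i. i \<in> I \<Longrightarrow> homog d (F i)) \<Longrightarrow> homog d (\<lambda>z. \<Sum>i\<in>I. F i z)"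
  unfolding homog_def by (simp add: sum_distrib_left)

lemma homog_hom_ext: "homog 0 (hom_ext f)"
  unfolding homog_def hom_ext_def
proof (intro allI impI)
  fix y :: "real^'a" and t :: real assume "y \<noteq> 0" "t > 0"
  have n: "norm (t *\<^sub>R y) = t * norm y" using \<open>t > 0\<close> by simp
  have c: "inverse (t * norm y) * t = inverse (norm y)" using \<open>t > 0\<close> by (simp add: field_simps)
  have "(t *\<^sub>R y) /\<^sub>R norm (t *\<^sub>R y) = (inverse (t * norm y) * t) *\<^sub>R y" by (simp only: n scaleR_scaleR)
  also have "\<dots> = y /\<^sub>R norm y" by (simp only: c)
  finally have e: "(t *\<^sub>R y) /\<^sub>R norm (t *\<^sub>R y) = y /\<^sub>R norm y" .
  show "f ((t *\<^sub>R y) /\<^sub>R norm (t *\<^sub>R y)) = t powr 0 * f (y /\<^sub>R norm y)"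
    unfolding e using \<open>t > 0\<close> by simp
qed



lemma schwarz_aux:
  fixes G :: "real^'n::finite \<Rightarrow> real"
  assumes S: "open S" "p \<in> S" and G: "sm S 2 G" and e: "e > 0"
  shows "\<exists>\<delta>>0. \<forall>h. 0 < h \<and> h < \<delta> \<longrightarrow>
    \<bar>(G (p + h *\<^sub>R u + h *\<^sub>R w) - G (p + h *\<^sub>R u) - G (p + h *\<^sub>R w) + G p)
      - h^2 * dirder u (dirder w G) p\<bar> \<le> e * h^2"
proof -
  define A where "A = dirder u (dirder w G)"
  have G2: "sm S (Suc (Suc 0)) G" using G by (simp add: numeral_2_eq_2)
  have G1: "sm S (Suc 0) (dirder w G)" using sm_dirder[OF G2] .
  have A0: "sm S 0 A" unfolding A_def using sm_dirder[OF G1] .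
  have "continuous_on S A" using A0 unfolding sm_0 by (rule differentiable_imp_continuous_on)
  then have "continuous (at p) A" using S continuous_on_eq_continuous_at by blast
  then obtain d0 where d0: "d0 > 0" "\<And>x. dist x p < d0 \<Longrightarrow> dist (A x) (A p) < e"
    using e unfolding continuous_at_eps_delta by blast
  obtain r where r: "r > 0" "ball p r \<subseteq> S" using S open_contains_ball by blast
  define m where "m = min d0 r"
  have m: "m > 0" "m \<le> d0" "ball p m \<subseteq> S" using d0 r unfolding m_def by auto
  define \<delta> where "\<delta> = m / (norm u + norm w + 1)"
  have npos: "norm u + norm w + 1 > 0" by (simp add: add_nonneg_pos)
  have \<delta>: "\<delta> > 0" unfolding \<delta>_def using m npos by simp
  show ?thesis
  proof (intro exI[of _ \<delta>] conjI allI impI \<delta>)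
    fix h :: real assume h: "0 < h \<and> h < \<delta>"
    have hm: "h * (norm u + norm w) < m"
    proof -
      have "h * (norm u + norm w) \<le> h * (norm u + norm w + 1)" using h by simp
      also have "\<dots> < \<delta> * (norm u + norm w + 1)" using h npos by simp
      also have "\<dots> = m" unfolding \<delta>_def using npos by simp
      finally show ?thesis .
    qed
    have inB: "p + s *\<^sub>R w + t *\<^sub>R u \<in> ball p m" if "0 \<le> s" "s \<le> h" "0 \<le> t" "t \<le> h" for s t
    proof -
      have "dist p (p + s *\<^sub>R w + t *\<^sub>R u) = norm (s *\<^sub>R w + t *\<^sub>R u)"
        using norm_minus_cancel[of "s *\<^sub>R w + t *\<^sub>R u"] by (simp add: dist_norm)
      also have "\<dots> \<le> norm (s *\<^sub>R w) + norm (t *\<^sub>R u)" by (rule norm_triangle_ineq)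
      also have "\<dots> = s * norm w + t * norm u" using that by simp
      also have "\<dots> \<le> h * norm w + h * norm u"
        using that by (intro add_mono mult_right_mono) auto
      also have "\<dots> < m" using hm by (simp add: algebra_simps)
      finally show ?thesis by simp
    qed
    have inS: "p + s *\<^sub>R w + t *\<^sub>R u \<in> S" if "0 \<le> s" "s \<le> h" "0 \<le> t" "t \<le> h" for s t
      using inB[OF that] m(3) by blast
    have Gd: "G differentiable (at (p + s *\<^sub>R w + t *\<^sub>R u))" if "0 \<le> s" "s \<le> h" "0 \<le> t" "t \<le> h" for s t
      by (rule sm_diffable[OF G S(1) inS[OF that]])
    have G1d: "dirder w G differentiable (at (p + s *\<^sub>R w + t *\<^sub>R u))" if "0 \<le> s" "s \<le> h" "0 \<le> t" "t \<le> h" for s t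
      by (rule sm_diffable[OF G1 S(1) inS[OF that]])
    define \<phi> where "\<phi> = (\<lambda>s. G ((p + h *\<^sub>R u) + s *\<^sub>R w) - G (p + s *\<^sub>R w))"
    have "\<exists>\<xi>. 0 < \<xi> \<and> \<xi> < h \<and> \<phi> h - \<phi> 0 = (h - 0) *
        (dirder w G ((p + h *\<^sub>R u) + \<xi> *\<^sub>R w) - dirder w G (p + \<xi> *\<^sub>R w))"
      unfolding \<phi>_def
    proof (rule MVT2)
      show "0 < h" using h by simp
      fix s assume s: "0 \<le> s" "s \<le> h"
      have e1: "(p + h *\<^sub>R u) + s *\<^sub>R w = p + s *\<^sub>R w + h *\<^sub>R u" by (simp add: algebra_simps)
      have e2: "p + s *\<^sub>R w = p + s *\<^sub>R w + 0 *\<^sub>R u" by simp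
      have d1: "G differentiable (at ((p + h *\<^sub>R u) + s *\<^sub>R w))"
        unfolding e1 using Gd[OF s] h by simp
      have d2: "G differentiable (at (p + s *\<^sub>R w))"
        using Gd[OF s, of 0] h by simp
      show "((\<lambda>s. G ((p + h *\<^sub>R u) + s *\<^sub>R w) - G (p + s *\<^sub>R w)) has_real_derivative
          dirder w G ((p + h *\<^sub>R u) + s *\<^sub>R w) - dirder w G (p + s *\<^sub>R w)) (at s)"
        by (intro DERIV_diff dirder_line d1 d2)
    qed
    then obtain \<xi> where \<xi>: "0 < \<xi>" "\<xi> < h" and
      \<xi>eq: "\<phi> h - \<phi> 0 = h * (dirder w G ((p + h *\<^sub>R u) + \<xi> *\<^sub>R w) - dirder w G (p + \<xi> *\<^sub>R w))"
      by auto
    define \<psi> where "\<psi> = (\<lambda>t. dirder w G ((p + \<xi> *\<^sub>R w) + t *\<^sub>R u))"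
    have "\<exists>\<eta>. 0 < \<eta> \<and> \<eta> < h \<and> \<psi> h - \<psi> 0 = (h - 0) * A ((p + \<xi> *\<^sub>R w) + \<eta> *\<^sub>R u)"
      unfolding \<psi>_def A_def
    proof (rule MVT2)
      show "0 < h" using h by simp
      fix t assume t: "0 \<le> t" "t \<le> h"
      show "((\<lambda>t. dirder w G ((p + \<xi> *\<^sub>R w) + t *\<^sub>R u)) has_real_derivative
          dirder u (dirder w G) ((p + \<xi> *\<^sub>R w) + t *\<^sub>R u)) (at t)"
        by (rule dirder_line) (rule G1d, use \<xi> t in auto)
    qed
    then obtain \<eta> where \<eta>: "0 < \<eta>" "\<eta> < h" and
      \<eta>eq: "\<psi> h - \<psi> 0 = h * A ((p + \<xi> *\<^sub>R w) + \<eta> *\<^sub>R u)"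
      by auto
    define q where "q = p + \<xi> *\<^sub>R w + \<eta> *\<^sub>R u"
    have qB: "q \<in> ball p m" unfolding q_def by (rule inB) (use \<xi> \<eta> in auto)
    then have "dist q p < d0" using m by (simp add: dist_commute)
    then have Aq: "\<bar>A q - A p\<bar> < e" using d0(2) by (simp add: dist_real_def)
    have "G (p + h *\<^sub>R u + h *\<^sub>R w) - G (p + h *\<^sub>R u) - G (p + h *\<^sub>R w) + G p = \<phi> h - \<phi> 0"
      unfolding \<phi>_def by simp
    also have "\<dots> = h * (\<psi> h - \<psi> 0)"
      unfolding \<xi>eq \<psi>_def by (simp add: algebra_simps)
    also have "\<dots> = h^2 * A q" unfolding \<eta>eq q_def by (simp add: power2_eq_square)
    finally have D: "G (p + h *\<^sub>R u + h *\<^sub>R w) - G (p + h *\<^sub>R u) - G (p + h *\<^sub>R w) + G p = h^2 * A q" .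
    have "\<bar>h^2 * A q - h^2 * A p\<bar> = h^2 * \<bar>A q - A p\<bar>"
      by (simp add: abs_mult right_diff_distrib[symmetric])
    also have "\<dots> \<le> e * h^2" using mult_right_mono[OF less_imp_le[OF Aq], of "h^2"] by (simp add: mult.commute)
    finally show "\<bar>(G (p + h *\<^sub>R u + h *\<^sub>R w) - G (p + h *\<^sub>R u) - G (p + h *\<^sub>R w) + G p)
      - h^2 * dirder u (dirder w G) p\<bar> \<le> e * h^2"
      unfolding D A_def[symmetric] .
  qed
qed

lemma schwarz:
  fixes G :: "real^'n::finite \<Rightarrow> real"
  assumes S: "open S" "p \<in> S" and G: "sm S 2 G"
  shows "dirder u (dirder w G) p = dirder w (dirder u G) p"
proof (rule ccontr)
  define A where "A = dirder u (dirder w G) p"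
  define B where "B = dirder w (dirder u G) p"
  assume "dirder u (dirder w G) p \<noteq> dirder w (dirder u G) p"
  then have AB: "A \<noteq> B" unfolding A_def B_def .
  define e where "e = \<bar>A - B\<bar> / 4"
  have e: "e > 0" unfolding e_def using AB by simp
  obtain d1 where d1: "d1 > 0" "\<And>h. 0 < h \<and> h < d1 \<Longrightarrow>
    \<bar>(G (p + h *\<^sub>R u + h *\<^sub>R w) - G (p + h *\<^sub>R u) - G (p + h *\<^sub>R w) + G p) - h^2 * A\<bar> \<le> e * h^2"
    using schwarz_aux[OF S G e, of u w] unfolding A_def by blast
  obtain d2 where d2: "d2 > 0" "\<And>h. 0 < h \<and> h < d2 \<Longrightarrow>
    \<bar>(G (p + h *\<^sub>R w + h *\<^sub>R u) - G (p + h *\<^sub>R w) - G (p + h *\<^sub>R u) + G p) - h^2 * B\<bar> \<le> e * h^2"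
    using schwarz_aux[OF S G e, of w u] unfolding B_def by blast
  define h where "h = min d1 d2 / 2"
  have h: "0 < h" "h < d1" "h < d2" unfolding h_def using d1 d2 by auto
  define D where "D = G (p + h *\<^sub>R u + h *\<^sub>R w) - G (p + h *\<^sub>R u) - G (p + h *\<^sub>R w) + G p"
  have D2: "G (p + h *\<^sub>R w + h *\<^sub>R u) - G (p + h *\<^sub>R w) - G (p + h *\<^sub>R u) + G p = D"
    unfolding D_def by (simp add: algebra_simps)
  have i1: "\<bar>D - h^2 * A\<bar> \<le> e * h^2" using d1(2)[of h] h unfolding D_def by simp
  have i2: "\<bar>D - h^2 * B\<bar> \<le> e * h^2" using d2(2)[of h] h D2 by simp
  have ee: "(D - h^2 * B) - (D - h^2 * A) = h^2 * (A - B)" by (simp add: algebra_simps)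
  have "h^2 * \<bar>A - B\<bar> = \<bar>(D - h^2 * B) - (D - h^2 * A)\<bar>"
    unfolding ee by (simp add: abs_mult)
  also have "\<dots> \<le> \<bar>D - h^2 * B\<bar> + \<bar>D - h^2 * A\<bar>" by (rule abs_triangle_ineq4)
  also have "\<dots> \<le> 2 * e * h^2" using i1 i2 by simp
  also have "\<dots> = h^2 * (\<bar>A - B\<bar> / 2)" unfolding e_def by simp
  finally have "h^2 * \<bar>A - B\<bar> \<le> h^2 * (\<bar>A - B\<bar> / 2)" .
  then have "\<bar>A - B\<bar> \<le> \<bar>A - B\<bar> / 2" using h by simp
  then show False using AB by simp
qed



lemma smooth_smD: "smooth_on S F \<Longrightarrow> sm S m F" by (simp add: smooth_sm)

lemma smooth_diffable: "smooth_on S F \<Longrightarrow> open S \<Longrightarrow> p \<in> S \<Longrightarrow> F differentiable (at p)"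
  using sm_diffable[OF smooth_smD] by blast

lemma smooth_dirder: "smooth_on S F \<Longrightarrow> smooth_on S (dirder v F)"
  unfolding smooth_sm using sm_dirder by blast

lemma smooth_add: "open S \<Longrightarrow> smooth_on S F \<Longrightarrow> smooth_on S G \<Longrightarrow> smooth_on S (\<lambda>z. F z + G z)"
  unfolding smooth_sm using sm_add by blast

lemma smooth_diff: "open S \<Longrightarrow> smooth_on S F \<Longrightarrow> smooth_on S G \<Longrightarrow> smooth_on S (\<lambda>z. F z - G z)"
  unfolding smooth_sm using sm_diff by blast

lemma smooth_mult: "open S \<Longrightarrow> smooth_on S F \<Longrightarrow> smooth_on S G \<Longrightarrow> smooth_on S (\<lambda>z. F z * G z)"
  unfolding smooth_sm using sm_mult by blast

lemma smooth_cmult: "open S \<Longrightarrow> smooth_on S F \<Longrightarrow> smooth_on S (\<lambda>z. c * F z)"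
  unfolding smooth_sm using sm_cmult by blast

lemma smooth_const: "smooth_on S (\<lambda>z. c)"
  unfolding smooth_sm using sm_const by blast

lemma smooth_inner: "smooth_on S (\<lambda>z. a \<bullet> z)"
  unfolding smooth_sm using sm_inner by blast

lemma smooth_self_inner: "open S \<Longrightarrow> smooth_on S (\<lambda>z. z \<bullet> z)"
  unfolding smooth_sm using sm_self_inner by blast

lemma smooth_inv_norm: "open S \<Longrightarrow> 0 \<notin> S \<Longrightarrow> smooth_on S (\<lambda>z. inverse (norm z))"
  unfolding smooth_sm using sm_inv_norm by blast

lemma smooth_norm: "open S \<Longrightarrow> 0 \<notin> S \<Longrightarrow> smooth_on S norm"
  unfolding smooth_sm using sm_norm by blast

lemma smooth_sum: "open S \<Longrightarrow> finite I \<Longrightarrow> (\<And>i. i \<in> I \<Longrightarrow> smooth_on S (F i)) \<Longrightarrow> smooth_on S (\<lambda>z. \<Sum>i\<in>I. F i z)"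
  unfolding smooth_sm using sm_sum by blast

lemma smooth_cong: "smooth_on S F \<Longrightarrow> open S \<Longrightarrow> (\<And>z. z \<in> S \<Longrightarrow> F z = G z) \<Longrightarrow> smooth_on S G"
  unfolding smooth_sm using sm_cong by blast

lemma lap_eq: "eucl_lap F = (\<lambda>y. \<Sum>i\<in>UNIV. dirder (axis i 1) (dirder (axis i 1) F) y)"
  by (rule ext) (simp add: eucl_lap_def)

lemma smooth_lap: "open S \<Longrightarrow> smooth_on S F \<Longrightarrow> smooth_on S (eucl_lap F)"
  unfolding lap_eq by (intro smooth_sum smooth_dirder) auto

lemma dirder_lin:
  assumes "F differentiable (at y)" "G differentiable (at y)"
  shows "dirder v (\<lambda>z. \<alpha> * F z + \<beta> * G z) y = \<alpha> * dirder v F y + \<beta> * dirder v G y"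
proof -
  have "((\<lambda>z. \<alpha> * F z + \<beta> * G z) has_derivative (\<lambda>v. \<alpha> * dirder v F y + \<beta> * dirder v G y)) (at y)"
    by (intro has_derivative_add has_derivative_mult_right dirder_works assms)
  from dirder_has[OF this] show ?thesis by simp
qed

lemma dirder_power:
  assumes "F differentiable (at y)"
  shows "dirder v (\<lambda>z. F z ^ k) y = real k * dirder v F y * F y ^ (k - 1)"
proof -
  from dirder_has[OF has_derivative_power[OF dirder_works[OF assms], of k]] show ?thesis by simp
qed

lemma dd_cong:
  assumes "open S" "p \<in> S" "\<And>z. z \<in> S \<Longrightarrow> dirder v F z = H z"
  shows "dirder w (dirder v F) p = dirder w H p"
  by (rule dirder_cong[OF assms(1,2)]) (rule assms(3))

lemma lap_cong:
  assumes "open S" "p \<in> S" "\<And>z. z \<in> S \<Longrightarrow> F z = G z"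
  shows "eucl_lap F p = eucl_lap G p"
  unfolding eucl_lap_def
proof (rule sum.cong[OF refl])
  fix i
  show "dirder (axis i 1) (dirder (axis i 1) F) p = dirder (axis i 1) (dirder (axis i 1) G) p"
    by (rule dd_cong[OF assms(1,2)]) (erule dirder_cong[OF assms(1) _ assms(3)])
qed

lemma lap_lin:
  assumes S: "open S" "p \<in> S" and F: "smooth_on S F" and G: "smooth_on S G"
  shows "eucl_lap (\<lambda>z. \<alpha> * F z + \<beta> * G z) p = \<alpha> * eucl_lap F p + \<beta> * eucl_lap G p"
proof -
  have "dirder e (dirder e (\<lambda>z. \<alpha> * F z + \<beta> * G z)) p
        = \<alpha> * dirder e (dirder e F) p + \<beta> * dirder e (dirder e G) p" for e
  proof -
    have "dirder e (dirder e (\<lambda>z. \<alpha> * F z + \<beta> * G z)) p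
        = dirder e (\<lambda>z. \<alpha> * dirder e F z + \<beta> * dirder e G z) p"
      by (rule dd_cong[OF S]) (rule dirder_lin[OF smooth_diffable[OF F S(1)] smooth_diffable[OF G S(1)]])
    also have "\<dots> = \<alpha> * dirder e (dirder e F) p + \<beta> * dirder e (dirder e G) p"
      by (rule dirder_lin[OF smooth_diffable[OF smooth_dirder[OF F] S] smooth_diffable[OF smooth_dirder[OF G] S]])
    finally show ?thesis .
  qed
  then show ?thesis unfolding eucl_lap_def by (simp add: sum.distrib sum_distrib_left)
qed

lemma lap_mult:
  assumes S: "open S" "p \<in> S" and F: "smooth_on S F" and G: "smooth_on S G"
  shows "eucl_lap (\<lambda>z. F z * G z) p = F p * eucl_lap G p
     + 2 * (\<Sum>i\<in>UNIV. dirder (axis i 1) F p * dirder (axis i 1) G p) + eucl_lap F p * G p"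
proof -
  have "dirder e (dirder e (\<lambda>z. F z * G z)) p
        = F p * dirder e (dirder e G) p + 2 * (dirder e F p * dirder e G p) + dirder e (dirder e F) p * G p" for e
  proof -
    have Fd: "F differentiable (at p)" using smooth_diffable[OF F S] .
    have Gd: "G differentiable (at p)" using smooth_diffable[OF G S] .
    have F1: "dirder e F differentiable (at p)" using smooth_diffable[OF smooth_dirder[OF F] S] .
    have G1: "dirder e G differentiable (at p)" using smooth_diffable[OF smooth_dirder[OF G] S] .
    have "dirder e (dirder e (\<lambda>z. F z * G z)) p
        = dirder e (\<lambda>z. F z * dirder e G z + dirder e F z * G z) p"
      by (rule dd_cong[OF S]) (rule dirder_mult[OF smooth_diffable[OF F S(1)] smooth_diffable[OF G S(1)]])
    also have "\<dots> = dirder e (\<lambda>z. F z * dirder e G z) p + dirder e (\<lambda>z. dirder e F z * G z) p"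
      by (rule dirder_add) (intro differentiable_mult Fd Gd F1 G1)+
    also have "\<dots> = F p * dirder e (dirder e G) p + 2 * (dirder e F p * dirder e G p) + dirder e (dirder e F) p * G p"
      unfolding dirder_mult[OF Fd G1] dirder_mult[OF F1 Gd] by (simp add: algebra_simps)
    finally show ?thesis .
  qed
  then show ?thesis unfolding eucl_lap_def
    by (simp add: sum.distrib sum_distrib_left sum_distrib_right)
qed

lemma open_S0: "open (- {0::real^'n::finite})" by auto

lemma sum_sq: "(\<Sum>i\<in>UNIV. (p $ i)^2) = norm (p::real^'n::finite) ^ 2"
  unfolding power2_norm_eq_inner inner_vec_def by (simp add: power2_eq_square)

lemma pair_expand:
  assumes "G differentiable (at p)"
  shows "(\<Sum>i\<in>UNIV. (v \<bullet> axis i 1) * dirder (axis i 1) G p) = dirder v G p"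
  using dirder_expand[OF assms, of v] by (simp add: inner_axis)

lemma lap_inner: "eucl_lap (\<lambda>z. a \<bullet> z) p = 0"
proof -
  have d: "dirder v (\<lambda>z. a \<bullet> z) = (\<lambda>z. a \<bullet> v)" for v by (rule ext) (rule dirder_inner)
  show ?thesis unfolding eucl_lap_def d by (simp add: dirder_const)
qed

lemma inner_diffat: "(\<lambda>z. a \<bullet> z) differentiable (at p)"
  using has_derivative_inner_right[OF has_derivative_ident] unfolding differentiable_def by blast

lemma nz1: "norm (p::real^'n::finite) = 1 \<Longrightarrow> p \<noteq> 0" by auto

lemma dirder_inv_norm1: "norm p = 1 \<Longrightarrow> dirder v (\<lambda>z. inverse (norm z)) p = - (p \<bullet> v)"
  using dirder_inv_norm[OF nz1, of p v] by simp

lemma dirder_norm1: "norm p = 1 \<Longrightarrow> dirder v norm p = p \<bullet> v"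
  using dirder_norm[OF nz1, of p v] by simp

lemma lap_inv_norm:
  fixes p :: "real^'n::finite"
  assumes p: "norm p = 1"
  shows "eucl_lap (\<lambda>z. inverse (norm z)) p = 3 - real CARD('n)"
proof -
  let ?ri = "\<lambda>z::real^'n. inverse (norm z)"
  have p0: "p \<in> - {0}" using p by auto
  have rid: "?ri differentiable (at p)" using diff_inv_norm[OF nz1[OF p]] .
  have "dirder e (dirder e ?ri) p = 3 * (p \<bullet> e)^2 - e \<bullet> e" for e
  proof -
    have "dirder e (dirder e ?ri) p = dirder e (\<lambda>z. ((- e) \<bullet> z) * ?ri z ^ 3) p"
      by (rule dd_cong[OF open_S0 p0]) (simp add: dirder_inv_norm inner_commute)
    also have "\<dots> = ((- e) \<bullet> p) * dirder e (\<lambda>z. ?ri z ^ 3) p + ((- e) \<bullet> e) * ?ri p ^ 3"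
      unfolding dirder_mult[OF inner_diffat differentiable_power[OF rid]] dirder_inner
      by (simp add: algebra_simps)
    also have "\<dots> = 3 * (p \<bullet> e)^2 - e \<bullet> e"
      using p by (simp add: dirder_power[OF rid] dirder_inv_norm1 inner_commute power2_eq_square)
    finally show ?thesis .
  qed
  then show ?thesis unfolding eucl_lap_def
    using p sum_sq[of p] by (simp add: sum_subtractf sum_distrib_left[symmetric] inner_axis inner_axis_axis)
qed

lemma lap_norm:
  fixes p :: "real^'n::finite"
  assumes p: "norm p = 1"
  shows "eucl_lap norm p = real CARD('n) - 1"
proof -
  let ?ri = "\<lambda>z::real^'n. inverse (norm z)"
  have p0: "p \<in> - {0}" using p by auto
  have rid: "?ri differentiable (at p)" using diff_inv_norm[OF nz1[OF p]] .
  have "dirder e (dirder e norm) p = e \<bullet> e - (p \<bullet> e)^2" for e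
  proof -
    have "dirder e (dirder e norm) p = dirder e (\<lambda>z. (e \<bullet> z) * ?ri z) p"
      by (rule dd_cong[OF open_S0 p0]) (simp add: dirder_norm inner_commute divide_inverse)
    also have "\<dots> = (e \<bullet> p) * dirder e ?ri p + (e \<bullet> e) * ?ri p"
      using dirder_mult[of "\<lambda>z. e \<bullet> z" p ?ri e] rid
      by (simp add: dirder_inner algebra_simps)
    also have "\<dots> = e \<bullet> e - (p \<bullet> e)^2"
      using p by (simp add: dirder_inv_norm1 inner_commute power2_eq_square)
    finally show ?thesis .
  qed
  then show ?thesis unfolding eucl_lap_def
    using p sum_sq[of p] by (simp add: sum_subtractf inner_axis inner_axis_axis)
qed



lemma sos_P: "smooth_on_sphere f \<Longrightarrow> smooth_on (- {0}) (hom_ext f)"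
  by (simp add: smooth_on_sphere_def)

lemma hom_ext_unit: "norm p = 1 \<Longrightarrow> hom_ext f p = f p"
  by (simp add: hom_ext_def)

lemma smooth_diffon: "smooth_on S F \<Longrightarrow> F differentiable_on S"
  using smooth_smD[of S F 0] by (simp add: sm_0)

lemma homog_eval: "homog d F \<Longrightarrow> y \<noteq> 0 \<Longrightarrow> F (y /\<^sub>R norm y) = (inverse (norm y)) powr d * F y"
  using homogD[of d F y "inverse (norm y)"] by simp

lemma homog_lap:
  fixes P :: "real^'n::finite \<Rightarrow> real"
  assumes "smooth_on (- {0}) P" "homog 0 P"
  shows "homog (-2) (eucl_lap P)"
proof -
  have "homog (0 - 1 - 1) (dirder (axis i 1) (dirder (axis i 1) P))" for i
    by (intro homog_dirder smooth_diffon smooth_dirder assms)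
  then have "homog (-2) (\<lambda>y. \<Sum>i\<in>UNIV. dirder (axis i 1) (dirder (axis i 1) P) y)"
    by (intro homog_sum) auto
  then show ?thesis unfolding lap_eq .
qed

lemma E1:
  fixes f :: "real^'n::finite \<Rightarrow> real"
  assumes f: "smooth_on_sphere f" and y: "y \<noteq> 0"
  shows "hom_ext (sph_lap f) y = (y \<bullet> y) * eucl_lap (hom_ext f) y"
proof -
  have "hom_ext (sph_lap f) y = eucl_lap (hom_ext f) (y /\<^sub>R norm y)"
    by (simp add: hom_ext_def sph_lap_def)
  also have "\<dots> = (inverse (norm y)) powr (-2) * eucl_lap (hom_ext f) y"
    by (rule homog_eval[OF homog_lap[OF sos_P[OF f] homog_hom_ext] y])
  also have "(inverse (norm y)) powr (-2) = y \<bullet> y"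
    using y by (simp add: powr_minus power2_norm_eq_inner[symmetric] power_inverse)
  finally show ?thesis .
qed

lemma E2: "hom_ext (\<lambda>z. (a \<bullet> z) * f z) y = (a \<bullet> y) * (inverse (norm y) * hom_ext f y)"
  by (simp add: hom_ext_def ac_simps)

lemma E3:
  fixes f :: "real^'n::finite \<Rightarrow> real"
  assumes f: "smooth_on_sphere f" and y: "y \<noteq> 0"
  shows "hom_ext (grad_deriv a f) y = norm y * dirder a (hom_ext f) y"
proof -
  define w where "w = y /\<^sub>R norm y"
  have w1: "norm w = 1" unfolding w_def using y by simp
  have w0: "w \<noteq> 0" using w1 by auto
  have Pd: "hom_ext f differentiable (at w)"
    using smooth_diffable[OF sos_P[OF f] open_S0] w0 by simp
  have "hom_ext (grad_deriv a f) y = grad_deriv a f w" by (simp add: hom_ext_def w_def)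
  also have "\<dots> = dirder a (hom_ext f) w - (a \<bullet> w) * dirder w (hom_ext f) w"
    unfolding grad_deriv_def by (rule dirder_dir_diff[OF Pd])
  also have "dirder w (hom_ext f) w = 0"
    using euler[OF homog_hom_ext w0 Pd] by simp
  also have "dirder a (hom_ext f) w = inverse (norm y) powr (0 - 1) * dirder a (hom_ext f) y"
    unfolding w_def
    by (rule homog_eval[OF homog_dirder[OF homog_hom_ext smooth_diffon[OF sos_P[OF f]]] y])
  also have "inverse (norm y) powr (0 - 1) = norm y"
    using y by (simp add: powr_minus)
  finally show ?thesis by simp
qed

lemma hom_ext_lin: "hom_ext (\<lambda>z. \<alpha> * f z + \<beta> * g z) = (\<lambda>y. \<alpha> * hom_ext f y + \<beta> * hom_ext g y)"
  by (rule ext) (simp add: hom_ext_def)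

lemma sos_lap: "smooth_on_sphere f \<Longrightarrow> smooth_on_sphere (sph_lap f)"
  unfolding smooth_on_sphere_def
  by (rule smooth_cong[OF smooth_mult[OF open_S0 smooth_self_inner[OF open_S0] smooth_lap[OF open_S0]] open_S0])
     (auto simp: E1 smooth_on_sphere_def)

lemma sos_x: "smooth_on_sphere f \<Longrightarrow> smooth_on_sphere (\<lambda>z. (a \<bullet> z) * f z)"
  unfolding smooth_on_sphere_def E2
  by (intro smooth_mult[OF open_S0] smooth_inner smooth_inv_norm[OF open_S0]) auto

lemma sos_X: "smooth_on_sphere f \<Longrightarrow> smooth_on_sphere (grad_deriv a f)"
  unfolding smooth_on_sphere_def
  by (rule smooth_cong[OF smooth_mult[OF open_S0 smooth_norm[OF open_S0] smooth_dirder] open_S0])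
     (auto simp: E3 smooth_on_sphere_def)

lemma sos_lin: "smooth_on_sphere f \<Longrightarrow> smooth_on_sphere g \<Longrightarrow> smooth_on_sphere (\<lambda>z. \<alpha> * f z + \<beta> * g z)"
  unfolding smooth_on_sphere_def hom_ext_lin
  by (intro smooth_add[OF open_S0] smooth_cmult[OF open_S0])

lemma sph_lap_lin:
  assumes "smooth_on_sphere f" "smooth_on_sphere g" "p \<noteq> 0"
  shows "sph_lap (\<lambda>z. \<alpha> * f z + \<beta> * g z) p = \<alpha> * sph_lap f p + \<beta> * sph_lap g p"
  unfolding sph_lap_def hom_ext_lin
  by (rule lap_lin[OF open_S0 _ sos_P[OF assms(1)] sos_P[OF assms(2)]]) (use assms in simp)

lemma grad_lin:
  assumes "smooth_on_sphere f" "smooth_on_sphere g" "p \<noteq> 0"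
  shows "grad_deriv a (\<lambda>z. \<alpha> * f z + \<beta> * g z) p = \<alpha> * grad_deriv a f p + \<beta> * grad_deriv a g p"
  unfolding grad_deriv_def hom_ext_lin
  by (rule dirder_lin) (rule smooth_diffable[OF sos_P open_S0], (use assms in simp)+)+

lemma hom_ext_cong: "(\<And>y. norm y = 1 \<Longrightarrow> f y = g y) \<Longrightarrow> z \<noteq> 0 \<Longrightarrow> hom_ext f z = hom_ext g z"
  unfolding hom_ext_def by simp

lemma sph_lap_cong:
  assumes "\<And>y. norm y = 1 \<Longrightarrow> f y = g y" "p \<noteq> 0"
  shows "sph_lap f p = sph_lap g p"
  unfolding sph_lap_def
  by (rule lap_cong[OF open_S0]) (use assms hom_ext_cong in auto)

lemma grad_cong:
  assumes "\<And>y. norm y = 1 \<Longrightarrow> f y = g y" "p \<noteq> 0"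
  shows "grad_deriv a f p = grad_deriv a g p"
  unfolding grad_deriv_def
  by (rule dirder_cong[OF open_S0]) (use assms hom_ext_cong in auto)

lemma grad_at:
  assumes f: "smooth_on_sphere f" and p: "norm p = 1"
  shows "grad_deriv a f p = dirder a (hom_ext f) p"
proof -
  have p0: "p \<noteq> 0" using p by auto
  have Pd: "hom_ext f differentiable (at p)"
    using smooth_diffable[OF sos_P[OF f] open_S0] p0 by simp
  show ?thesis
    unfolding grad_deriv_def dirder_dir_diff[OF Pd] euler[OF homog_hom_ext p0 Pd] by simp
qed



lemma L1:
  fixes f :: "real^'n::finite \<Rightarrow> real"
  assumes f: "smooth_on_sphere f" and p: "norm p = 1"
  shows "sph_lap (\<lambda>z. (a \<bullet> z) * f z) p
    = (a \<bullet> p) * sph_lap f p - (real CARD('n) - 1) * (a \<bullet> p) * f p + 2 * grad_deriv a f p"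
proof -
  define P where "P = hom_ext f"
  define ri where "ri = (\<lambda>z::real^'n. inverse (norm z))"
  define K where "K = (\<lambda>z. ri z * P z)"
  have p0: "p \<in> - {0}" using p by auto
  have Ps: "smooth_on (- {0}) P" unfolding P_def by (rule sos_P[OF f])
  have ris: "smooth_on (- {0}) ri" unfolding ri_def by (rule smooth_inv_norm[OF open_S0]) auto
  have Ks: "smooth_on (- {0}) K" unfolding K_def by (rule smooth_mult[OF open_S0 ris Ps])
  have Pd: "P differentiable (at p)" using smooth_diffable[OF Ps open_S0 p0] .
  have rid: "ri differentiable (at p)" using smooth_diffable[OF ris open_S0 p0] .
  have Kd: "K differentiable (at p)" using smooth_diffable[OF Ks open_S0 p0] .
  have rip: "ri p = 1" unfolding ri_def using p by simp
  have eu: "dirder p P p = 0" using euler[OF homog_hom_ext nz1[OF p] Pd[unfolded P_def]] unfolding P_def by simp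
  have "sph_lap (\<lambda>z. (a \<bullet> z) * f z) p = eucl_lap (\<lambda>z. (a \<bullet> z) * K z) p"
    unfolding sph_lap_def
    by (rule lap_cong[OF open_S0 p0]) (simp add: E2 K_def ri_def P_def)
  also have "\<dots> = (a \<bullet> p) * eucl_lap K p
      + 2 * (\<Sum>i\<in>UNIV. dirder (axis i 1) (\<lambda>z. a \<bullet> z) p * dirder (axis i 1) K p)
      + eucl_lap (\<lambda>z. a \<bullet> z) p * K p"
    by (rule lap_mult[OF open_S0 p0 smooth_inner Ks])
  also have "(\<Sum>i\<in>UNIV. dirder (axis i 1) (\<lambda>z. a \<bullet> z) p * dirder (axis i 1) K p) = dirder a K p"
    unfolding dirder_inner by (rule pair_expand[OF Kd])
  also have "dirder a K p = dirder a P p - (p \<bullet> a) * P p"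
    unfolding K_def dirder_mult[OF rid Pd] rip using dirder_inv_norm1[OF p, of a]
    by (simp add: ri_def)
  also have "eucl_lap K p = eucl_lap P p + (3 - real CARD('n)) * P p"
  proof -
    have "eucl_lap K p = ri p * eucl_lap P p
      + 2 * (\<Sum>i\<in>UNIV. dirder (axis i 1) ri p * dirder (axis i 1) P p) + eucl_lap ri p * P p"
      unfolding K_def by (rule lap_mult[OF open_S0 p0 ris Ps])
    also have "(\<Sum>i\<in>UNIV. dirder (axis i 1) ri p * dirder (axis i 1) P p)
        = - (\<Sum>i\<in>UNIV. (p \<bullet> axis i 1) * dirder (axis i 1) P p)"
      unfolding ri_def dirder_inv_norm1[OF p] by (simp add: sum_negf)
    also have "(\<Sum>i\<in>UNIV. (p \<bullet> axis i 1) * dirder (axis i 1) P p) = 0"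
      using pair_expand[OF Pd, of p] eu by simp
    also have "eucl_lap ri p = 3 - real CARD('n)" unfolding ri_def by (rule lap_inv_norm[OF p])
    finally show ?thesis using rip by simp
  qed
  finally have "sph_lap (\<lambda>z. (a \<bullet> z) * f z) p
     = (a \<bullet> p) * (eucl_lap P p + (3 - real CARD('n)) * P p) + 2 * (dirder a P p - (p \<bullet> a) * P p)"
    using lap_inner[of a p] by simp
  moreover have "sph_lap f p = eucl_lap P p" unfolding P_def sph_lap_def ..
  moreover have "f p = P p" unfolding P_def using hom_ext_unit[OF p] by simp
  moreover have "grad_deriv a f p = dirder a P p" unfolding P_def by (rule grad_at[OF f p])
  ultimately show ?thesis by (simp add: inner_commute algebra_simps)
qed

lemma L2:
  fixes f :: "real^'n::finite \<Rightarrow> real"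
  assumes f: "smooth_on_sphere f" and p: "norm p = 1"
  shows "sph_lap (grad_deriv a f) p
    = grad_deriv a (sph_lap f) p - 2 * (a \<bullet> p) * sph_lap f p + (real CARD('n) - 3) * grad_deriv a f p"
proof -
  define P where "P = hom_ext f"
  define Q where "Q = dirder a P"
  have p0: "p \<in> - {0}" using p by auto
  have Ps: "smooth_on (- {0}) P" unfolding P_def by (rule sos_P[OF f])
  have Qs: "smooth_on (- {0}) Q" unfolding Q_def by (rule smooth_dirder[OF Ps])
  have Pd: "P differentiable (at p)" using smooth_diffable[OF Ps open_S0 p0] .
  have Qd: "Q differentiable (at p)" using smooth_diffable[OF Qs open_S0 p0] .
  have Qh: "homog (0 - 1) Q" unfolding Q_def P_def
    by (rule homog_dirder[OF homog_hom_ext smooth_diffon[OF sos_P[OF f]]])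
  have euQ: "dirder p Q p = - Q p" using euler[OF Qh nz1[OF p] Qd] by simp
  have ns: "smooth_on (- {0}) (norm :: real^'n \<Rightarrow> real)" by (rule smooth_norm[OF open_S0]) auto
  have "sph_lap (grad_deriv a f) p = eucl_lap (\<lambda>z. norm z * Q z) p"
    unfolding sph_lap_def
    by (rule lap_cong[OF open_S0 p0]) (use f in \<open>simp add: E3 Q_def P_def\<close>)
  also have "\<dots> = norm p * eucl_lap Q p
      + 2 * (\<Sum>i\<in>UNIV. dirder (axis i 1) norm p * dirder (axis i 1) Q p) + eucl_lap norm p * Q p"
    by (rule lap_mult[OF open_S0 p0 ns Qs])
  also have "(\<Sum>i\<in>UNIV. dirder (axis i 1) norm p * dirder (axis i 1) Q p) = dirder p Q p"
    unfolding dirder_norm1[OF p] by (rule pair_expand[OF Qd])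
  also have "eucl_lap norm p = real CARD('n) - 1" by (rule lap_norm[OF p])
  also have "eucl_lap Q p = dirder a (eucl_lap P) p"
  proof -
    have Pi: "smooth_on (- {0}) (dirder (axis i 1) P)" for i by (rule smooth_dirder[OF Ps])
    have "dirder (axis i 1) (dirder (axis i 1) Q) p = dirder a (dirder (axis i 1) (dirder (axis i 1) P)) p" for i
    proof -
      have "dirder (axis i 1) (dirder (axis i 1) Q) p = dirder (axis i 1) (dirder a (dirder (axis i 1) P)) p"
        unfolding Q_def
        by (rule dd_cong[OF open_S0 p0]) (rule schwarz[OF open_S0 _ smooth_smD[OF Ps]])
      also have "\<dots> = dirder a (dirder (axis i 1) (dirder (axis i 1) P)) p"
        by (rule schwarz[OF open_S0 p0 smooth_smD[OF Pi]])
      finally show ?thesis .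
    qed
    then have "eucl_lap Q p = (\<Sum>i\<in>UNIV. dirder a (dirder (axis i 1) (dirder (axis i 1) P)) p)"
      unfolding eucl_lap_def by simp
    also have "\<dots> = dirder a (\<lambda>z. \<Sum>i\<in>UNIV. dirder (axis i 1) (dirder (axis i 1) P) z) p"
      by (rule dirder_sum[symmetric]) (auto intro: smooth_diffable[OF smooth_dirder[OF Pi] open_S0 p0])
    finally show ?thesis unfolding lap_eq .
  qed
  also have "dirder a (eucl_lap P) p = grad_deriv a (sph_lap f) p - 2 * (a \<bullet> p) * eucl_lap P p"
  proof -
    have Ls: "smooth_on (- {0}) (eucl_lap P)" by (rule smooth_lap[OF open_S0 Ps])
    have Ld: "eucl_lap P differentiable (at p)" using smooth_diffable[OF Ls open_S0 p0] .
    have "grad_deriv a (sph_lap f) p = dirder a (hom_ext (sph_lap f)) p"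
      by (rule grad_at[OF sos_lap[OF f] p])
    also have "\<dots> = dirder a (\<lambda>z. (z \<bullet> z) * eucl_lap P z) p"
      by (rule dirder_cong[OF open_S0 p0]) (use f in \<open>simp add: E1 P_def\<close>)
    also have "\<dots> = (p \<bullet> p) * dirder a (eucl_lap P) p + 2 * (p \<bullet> a) * eucl_lap P p"
      unfolding dirder_mult[OF differentiable_on_eq_differentiable_at[OF open_S0, THEN iffD1, OF self_inner_diffon, rule_format, OF p0] Ld]
        dirder_self_inner by simp
    finally show ?thesis using p by (simp add: inner_commute power2_norm_eq_inner[symmetric])
  qed
  finally have "sph_lap (grad_deriv a f) p
    = grad_deriv a (sph_lap f) p - 2 * (a \<bullet> p) * eucl_lap P p + 2 * (- Q p) + (real CARD('n) - 1) * Q p"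
    using p euQ by simp
  moreover have "sph_lap f p = eucl_lap P p" unfolding P_def sph_lap_def ..
  moreover have "grad_deriv a f p = Q p" unfolding Q_def P_def by (rule grad_at[OF f p])
  ultimately show ?thesis by (simp add: algebra_simps)
qed



lemma GJMS_Suc_lin: "GJMS n (Suc m) u = (\<lambda>p. (-1) * sph_lap (GJMS n m u) p
      + ((real n - 2 * real (Suc m)) * (real n + 2 * real (Suc m) - 2) / 4) * GJMS n m u p)"
  by (rule ext) simp

lemma sos_GJMS: "smooth_on_sphere u \<Longrightarrow> smooth_on_sphere (GJMS n m u)"
proof (induction m)
  case 0 then show ?case by simp
next
  case (Suc m)
  show ?case unfolding GJMS_Suc_lin by (intro sos_lin sos_lap Suc)
qed

theorem corollary3p4:
  fixes n k :: nat and a :: "real^'n::finite" and u :: "real^'n \<Rightarrow> real"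
  assumes "CARD('n) = n + 1" and "n \<ge> 2" and "k \<ge> 1"
    and "smooth_on_sphere u"
  shows "\<forall>p\<in>sphere 0 1.
    GJMS n k (\<lambda>y. (a \<bullet> y) * u y) p - (a \<bullet> p) * GJMS n k u p
    = real k * ((real n + 2 * real k - 2) * (a \<bullet> p) * GJMS n (k - 1) u p
                - 2 * grad_deriv a (GJMS n (k - 1) u) p)"
proof -
  have card: "real CARD('n) = real n + 1" using assms(1) by simp
  have us: "smooth_on_sphere u" by (rule assms(4))
  have sG: "smooth_on_sphere (GJMS n m u)" for m by (rule sos_GJMS[OF us])
  define xu where "xu = (\<lambda>y. (a \<bullet> y) * u y)"
  have main: "\<forall>p. norm p = 1 \<longrightarrow>
    GJMS n k xu p - (a \<bullet> p) * GJMS n k u p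
    = real k * ((real n + 2 * real k - 2) * (a \<bullet> p) * GJMS n (k - 1) u p
                - 2 * grad_deriv a (GJMS n (k - 1) u) p)"
    using assms(3)
  proof (induction k rule: nat_induct_at_least)
    case base
    show ?case
    proof (intro allI impI)
      fix p :: "real^'n" assume p: "norm p = 1"
      have "sph_lap xu p = (a \<bullet> p) * sph_lap u p - real n * (a \<bullet> p) * u p + 2 * grad_deriv a u p"
        unfolding xu_def L1[OF us p] card by simp
      then show "GJMS n 1 xu p - (a \<bullet> p) * GJMS n 1 u p
        = real 1 * ((real n + 2 * real 1 - 2) * (a \<bullet> p) * GJMS n (1 - 1) u p
                - 2 * grad_deriv a (GJMS n (1 - 1) u) p)"
        by (simp add: xu_def algebra_simps)
    qed
  next
    case (Suc k)
    then obtain j where kj: "k = Suc j" by (cases k) auto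
    define A where "A = GJMS n k u"
    define B where "B = GJMS n j u"
    define ck where "ck = (real n - 2 * real k) * (real n + 2 * real k - 2) / 4"
    define ck1 where "ck1 = (real n - 2 * real (Suc k)) * (real n + 2 * real (Suc k) - 2) / 4"
    have As: "smooth_on_sphere A" unfolding A_def by (rule sG)
    have Bs: "smooth_on_sphere B" unfolding B_def by (rule sG)
    have Aeq: "A = (\<lambda>y. (-1) * sph_lap B y + ck * B y)"
      unfolding A_def B_def ck_def kj GJMS_Suc_lin ..
    have km1: "k - 1 = j" using kj by simp
    define T1 where "T1 = (\<lambda>y. (a \<bullet> y) * A y)"
    define T2 where "T2 = (\<lambda>y. (a \<bullet> y) * B y)"
    define T3 where "T3 = grad_deriv a B"
    define \<alpha> where "\<alpha> = real k * (real n + 2 * real k - 2)"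
    define \<beta> where "\<beta> = - 2 * real k"
    define W where "W = (\<lambda>y. \<alpha> * T2 y + \<beta> * T3 y)"
    define R where "R = (\<lambda>y. 1 * T1 y + 1 * W y)"
    have s1: "smooth_on_sphere T1" unfolding T1_def by (rule sos_x[OF As])
    have s2: "smooth_on_sphere T2" unfolding T2_def by (rule sos_x[OF Bs])
    have s3: "smooth_on_sphere T3" unfolding T3_def by (rule sos_X[OF Bs])
    have sW: "smooth_on_sphere W" unfolding W_def by (rule sos_lin[OF s2 s3])
    have IH: "GJMS n k xu y = R y" if "norm y = 1" for y
      using Suc.IH[rule_format, OF that] unfolding R_def W_def T1_def T2_def T3_def A_def B_def km1 \<alpha>_def \<beta>_def
      by (simp add: algebra_simps)
    show ?case
    proof (intro allI impI)
      fix p :: "real^'n" assume p: "norm p = 1"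
      have p0: "p \<noteq> 0" using p by auto
      have LXU: "sph_lap (GJMS n k xu) p = sph_lap R p"
        by (rule sph_lap_cong[OF IH p0])
      have LR: "sph_lap R p = sph_lap T1 p + (\<alpha> * sph_lap T2 p + \<beta> * sph_lap T3 p)"
      proof -
        have "sph_lap R p = 1 * sph_lap T1 p + 1 * sph_lap W p"
          unfolding R_def by (rule sph_lap_lin[OF s1 sW p0])
        moreover have "sph_lap W p = \<alpha> * sph_lap T2 p + \<beta> * sph_lap T3 p"
          unfolding W_def by (rule sph_lap_lin[OF s2 s3 p0])
        ultimately show ?thesis by simp
      qed
      have LT1: "sph_lap T1 p = (a \<bullet> p) * sph_lap A p - real n * (a \<bullet> p) * A p + 2 * grad_deriv a A p"
        unfolding T1_def L1[OF As p] card by simp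
      have LT2: "sph_lap T2 p = (a \<bullet> p) * sph_lap B p - real n * (a \<bullet> p) * B p + 2 * grad_deriv a B p"
        unfolding T2_def L1[OF Bs p] card by simp
      have LT3: "sph_lap T3 p = grad_deriv a (sph_lap B) p - 2 * (a \<bullet> p) * sph_lap B p + (real n - 2) * grad_deriv a B p"
        unfolding T3_def L2[OF Bs p] card by simp
      have XA: "grad_deriv a A p = (-1) * grad_deriv a (sph_lap B) p + ck * grad_deriv a B p"
        unfolding Aeq by (rule grad_lin[OF sos_lap[OF Bs] Bs p0])
      have Ap: "A p = (-1) * sph_lap B p + ck * B p" unfolding Aeq ..
      have XUp: "GJMS n k xu p = (a \<bullet> p) * A p + \<alpha> * ((a \<bullet> p) * B p) + \<beta> * grad_deriv a B p"
        using IH[OF p] unfolding R_def W_def T1_def T2_def T3_def by simp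
      have G1: "GJMS n (Suc k) xu p = - sph_lap (GJMS n k xu) p + ck1 * GJMS n k xu p"
        unfolding ck1_def by simp
      have G2: "GJMS n (Suc k) u p = - sph_lap A p + ck1 * A p"
        unfolding ck1_def A_def by simp
      have Sk: "Suc k - 1 = k" by simp
      show "GJMS n (Suc k) xu p - (a \<bullet> p) * GJMS n (Suc k) u p
        = real (Suc k) * ((real n + 2 * real (Suc k) - 2) * (a \<bullet> p) * GJMS n (Suc k - 1) u p
                - 2 * grad_deriv a (GJMS n (Suc k - 1) u) p)"
        unfolding G1 G2 Sk A_def[symmetric] LXU LR LT1 LT2 LT3 XUp XA Ap
        unfolding \<alpha>_def \<beta>_def ck_def ck1_def kj
        by (simp add: field_simps)
    qed
  qed
  show ?thesis
  proof
    fix p :: "real^'n" assume "p \<in> sphere 0 1"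
    then have "norm p = 1" by simp
    then show "GJMS n k (\<lambda>y. (a \<bullet> y) * u y) p - (a \<bullet> p) * GJMS n k u p
      = real k * ((real n + 2 * real k - 2) * (a \<bullet> p) * GJMS n (k - 1) u p
                - 2 * grad_deriv a (GJMS n (k - 1) u) p)"
      using main unfolding xu_def by blast
  qed
qed


end
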